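(* Let $D'\geq2$ and let $j_{1},j_{2}\geq0$ be integers with $j_{1}+j_{2}=D'-2$. Let $M$ be the $\mathfrak{m}\times D'$ circulant matrix whose first row is $(1,0^{j_{1}},-1,0^{j_{2}})$, where $0^{j}$ denotes $j$ consecutive zeros. If $\mathfrak{m}\leq\lceil D'/2\rceil$, then the rank of $M$ equals $\mathfrak{m}$.
   Context: An $\mathfrak{m}\times D'$ circulant matrix with first row $(\mathfrak{a}_{1},\ldots,\mathfrak{a}_{D'})$ is the matrix whose $i$-th row ($i=1,\ldots,\mathfrak{m}$) is the first row cyclically rotated to the right by $i-1$ positions; e.g. the second row is $(\mathfrak{a}_{D'},\mathfrak{a}_{1},\ldots,\mathfrak{a}_{D'-1})$. *)

theory Defs
  imports "Jordan_Normal_Form.DL_Rank"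
begin

definition circulant_mat :: "nat \<Rightarrow> 'a list \<Rightarrow> 'a mat" where
  "circulant_mat m a =
     mat m (length a) (\<lambda>(i, j). a ! nat ((int j - int i) mod int (length a)))"

end

theory Submission
  imports Defs "Jordan_Normal_Form.DL_Rank_Submatrix"
begin

lemma pick_lessThan: "k < m \<Longrightarrow> pick {j. j < m} k = k"
proof (induction k)
  case 0
  then show ?case by (simp add: Least_eq_0)
next
  case (Suc k)
  then have IH: "pick {j. j < m} k = k" by simp
  show ?case unfolding pick.simps IH
    by (rule Least_equality) (use Suc.prems in auto)
qed

lemma L_nth:
  fixes j1 j2 :: nat
  assumes "k < Suc (Suc (j1 + j2))"
  shows "([1] @ replicate j1 0 @ [-1] @ replicate j2 (0::real)) ! k =
         (if k = 0 then 1 else if k = Suc j1 then -1 else 0)"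
  using assms by (auto simp: nth_append nth_Cons split: nat.splits)

lemma (in vec_space) rank_le_n:
  assumes "A \<in> carrier_mat n nc"
  shows "rank A \<le> n"
proof -
  have sub: "set (cols A) \<subseteq> carrier_vec n" using assms cols_dim by blast
  have "VectorSpace.subspace class_ring (span (set (cols A))) V"
    using span_is_subspace sub by auto
  then have "vectorspace.dim class_ring (vs (span (set (cols A)))) \<le> dim"
    using subspace_dim fin_dim fin_dim_span_cols[OF assms] by blast
  then show ?thesis unfolding rank_def dim_is_n .
qed

theorem lemma6:
  fixes D' j1 j2 m :: nat
  assumes "D' \<ge> 2" and "j1 + j2 = D' - 2"
    and "m \<le> nat \<lceil>real D' / 2\<rceil>"
  shows "vec_space.rank m
           (circulant_mat m ([1] @ replicate j1 0 @ [-1] @ replicate j2 (0::real))) = m"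
proof -
  define L where "L = [1] @ replicate j1 0 @ [-1] @ replicate j2 (0::real)"
  define A where "A = circulant_mat m L"
  have lenL: "length L = D'" using assms(1,2) by (simp add: L_def)
  have m2: "2 * m \<le> D' + 1" using assms(3)
    by linarith
  have mD: "m \<le> D'" using m2 assms(1) by linarith
  have Acar: "A \<in> carrier_mat m D'" by (simp add: A_def circulant_mat_def lenL)
  have Lk: "L ! k = (if k = 0 then 1 else if k = Suc j1 then -1 else 0)" if "k < D'" for k
    unfolding L_def using L_nth[of k j1 j2] that assms(1,2) by simp
  have Aij: "A $$ (i, j) = L ! (if i \<le> j then j - i else j + D' - i)"
    if "i < m" "j < m" for i j
  proof -
    have idx: "nat ((int j - int i) mod int D') = (if i \<le> j then j - i else j + D' - i)"
    proof (cases "i \<le> j")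
      case True
      have e: "int j - int i = int (j - i)" using True by simp
      have "int (j - i) mod int D' = int (j - i)"
        using that mD by (intro mod_pos_pos_trivial) auto
      then show ?thesis using True by (simp only: e if_True nat_int)
    next
      case False
      have e: "int j - int i + int D' = int (j + D' - i)" using False that mD by simp
      have "(int j - int i) mod int D' = (int j - int i + int D') mod int D'"
        by simp
      also have "\<dots> = int j - int i + int D'"
        using that mD False by (intro mod_pos_pos_trivial) auto
      finally show ?thesis using False by (simp only: e if_False nat_int)
    qed
    show ?thesis using idx that mD unfolding A_def circulant_mat_def lenL by simp
  qed
  define B where "B = submatrix A UNIV {j. j < m}"
  have cardm: "card {j. j < D' \<and> j \<in> {j. j < m}} = m"
  proof -
    have "{j. j < D' \<and> j \<in> {j. j < m}} = {..<m}" using mD by auto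
    then show ?thesis by simp
  qed
  have Bcar: "B \<in> carrier_mat m m"
    unfolding B_def using Acar cardm by (auto simp: dim_submatrix)
  have Bij: "B $$ (i, j) = A $$ (i, j)" if "i < m" "j < m" for i j
    unfolding B_def using submatrix_index[of i A UNIV j "{j. j < m}"] that Acar cardm mD
    by (simp add: pick_UNIV pick_lessThan)
  have diag1: "prod_list (diag_mat B) = 1"
  proof -
    have "diag_mat B = replicate m 1"
      using Bcar Bij Aij Lk mD by (auto simp: diag_mat_def intro!: nth_equalityI)
    then show ?thesis by simp
  qed
  have detB: "det B = 1"
  proof (cases "Suc j1 \<ge> m")
    case True
    have "det B = prod_list (diag_mat B)"
    proof (rule det_lower_triangular[OF _ Bcar])
      fix i j assume "i < j" "j < m"
      then show "B $$ (i, j) = 0" using Bij Aij Lk True mD by auto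
    qed
    also have "\<dots> = 1" by (rule diag1)
    finally show ?thesis .
  next
    case False
    have "det B = prod_list (diag_mat B)"
    proof (rule det_upper_triangular[OF _ Bcar])
      show "upper_triangular B" unfolding upper_triangular_def
        using Bcar Bij Aij Lk False m2 by auto
    qed
    also have "\<dots> = 1" by (rule diag1)
    finally show ?thesis .
  qed
  have "m \<le> vec_space.rank m A"
    using vec_space.rank_gt_minor[OF Acar, of UNIV "{j. j < m}"] detB cardm B_def by simp
  moreover have "vec_space.rank m A \<le> m" using vec_space.rank_le_n[OF Acar] .
  ultimately show ?thesis unfolding A_def L_def by simp
qed

end
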